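(* Let $\Gamma$ be a finite constraint language, $\mathbf{I}$ a CSP instance with incidence graph $G$, and $q,k\in\mathbb{N}$. If $G$ has no $(q,k+1)$-separation, then $\mathbf{I}$ is $(q,k)$-nice.
   Context: A CSP instance is a finite set of constraints $(S,R)$ ($S$ a sequence of variables, $R$ a relation over a finite domain $\mathcal{D}$); its incidence graph $G$ is the bipartite graph on variables and constraints with $x\sim C$ iff $x$ in the scope of $C$. A $(q,k)$-separation of $G$ is a partition $(A,S,B)$ of $V(G)$ with $S$ consisting of variable vertices, $N(A),N(B)\subseteq S$, $|S|\le k$, and $|A|,|B|\ge q$. For $\alpha:X\to\mathcal{D}$, $\mathbf{I}|_\alpha$ restricts each relation to tuples consistent with $\alpha$ and removes positions of variables in $X$; $X$ is a strong backdoor into $\mathrm{CSP}(\Gamma)$ if every $\mathbf{I}|_\alpha$ uses only relations from $\Gamma$. $\mathbf{Torso}_G(X)$ is the graph on $X$ with $x_1x_2$ an edge iff adjacent in $G$ or both adjacent to a common component of $G-X$; the width of $X$ is $\mathrm{tw}(\mathbf{Torso}_G(X))$. $\mathbf{I}$ is $(\beta,k)$-nice if $\mathrm{tw}(G)\le\beta+k$, or if whenever $\mathbf{I}$ has a strong backdoor into $\mathrm{CSP}(\Gamma)$ of width at most $k$, it has one, $X$, of width at most $k$ such that $G-X$ has exactly one connected component $C$ with at least $\beta+1$ vertices and $|V(G)\setminus N[C]|\le\beta$. *)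

theory Defs
  imports Main
begin

definition conn_in :: "('a \<Rightarrow> 'a \<Rightarrow> bool) \<Rightarrow> 'a set \<Rightarrow> bool" where
  "conn_in E S \<longleftrightarrow> (\<forall>x\<in>S. \<forall>y\<in>S. (x, y) \<in> {(a, b). a \<in> S \<and> b \<in> S \<and> E a b}\<^sup>*)"

definition is_tree :: "nat set \<Rightarrow> nat set set \<Rightarrow> bool" where
  "is_tree N TE \<longleftrightarrow> finite N \<and> N \<noteq> {} \<and>
     TE \<subseteq> {{a, b} | a b. a \<in> N \<and> b \<in> N \<and> a \<noteq> b} \<and>
     conn_in (\<lambda>a b. {a, b} \<in> TE) N \<and> card TE + 1 = card N"

definition tree_decomp ::
  "'a set \<Rightarrow> ('a \<Rightarrow> 'a \<Rightarrow> bool) \<Rightarrow> nat set \<Rightarrow> nat set set \<Rightarrow> (nat \<Rightarrow> 'a set) \<Rightarrow> bool" where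
  "tree_decomp V E N TE bag \<longleftrightarrow> is_tree N TE \<and>
     (\<forall>t\<in>N. bag t \<subseteq> V) \<and>
     (\<forall>v\<in>V. \<exists>t\<in>N. v \<in> bag t) \<and>
     (\<forall>u\<in>V. \<forall>v\<in>V. E u v \<longrightarrow> (\<exists>t\<in>N. u \<in> bag t \<and> v \<in> bag t)) \<and>
     (\<forall>v\<in>V. conn_in (\<lambda>a b. {a, b} \<in> TE) {t \<in> N. v \<in> bag t})"

definition treewidth :: "'a set \<Rightarrow> ('a \<Rightarrow> 'a \<Rightarrow> bool) \<Rightarrow> int" where
  "treewidth V E = int (LEAST m. \<exists>N TE bag. tree_decomp V E N TE bag \<and> (\<forall>t\<in>N. card (bag t) \<le> m)) - 1"

definition nbh :: "'a set \<Rightarrow> ('a \<Rightarrow> 'a \<Rightarrow> bool) \<Rightarrow> 'a set \<Rightarrow> 'a set" where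
  "nbh V E A = {v \<in> V. v \<notin> A \<and> (\<exists>a\<in>A. E a v)}"

definition cnbh :: "'a set \<Rightarrow> ('a \<Rightarrow> 'a \<Rightarrow> bool) \<Rightarrow> 'a set \<Rightarrow> 'a set" where
  "cnbh V E A = A \<union> nbh V E A"

definition comps :: "'a set \<Rightarrow> ('a \<Rightarrow> 'a \<Rightarrow> bool) \<Rightarrow> 'a set \<Rightarrow> 'a set set" where
  "comps V E X = {C. C \<noteq> {} \<and> C \<subseteq> V - X \<and> conn_in E C \<and>
      (\<forall>D. C \<subseteq> D \<and> D \<subseteq> V - X \<and> conn_in E D \<longrightarrow> D = C)}"

definition torsoE :: "'a set \<Rightarrow> ('a \<Rightarrow> 'a \<Rightarrow> bool) \<Rightarrow> 'a set \<Rightarrow> 'a \<Rightarrow> 'a \<Rightarrow> bool" where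
  "torsoE V E X x1 x2 \<longleftrightarrow> x1 \<in> X \<and> x2 \<in> X \<and> x1 \<noteq> x2 \<and>
     (E x1 x2 \<or> (\<exists>C\<in>comps V E X. (\<exists>a\<in>C. E x1 a) \<and> (\<exists>b\<in>C. E x2 b)))"

definition torso_width :: "'a set \<Rightarrow> ('a \<Rightarrow> 'a \<Rightarrow> bool) \<Rightarrow> 'a set \<Rightarrow> int" where
  "torso_width V E X = treewidth X (torsoE V E X)"

text \<open>A relation over the domain 'd: (arity, set of tuples).\<close>
type_synonym 'd relation = "nat \<times> 'd list set"
type_synonym ('v, 'd) constr = "'v list \<times> 'd relation"
type_synonym ('v, 'd) csp_inst = "('v, 'd) constr set"

definition wf_relation :: "'d relation \<Rightarrow> bool" where
  "wf_relation R \<longleftrightarrow> (\<forall>t\<in>snd R. length t = fst R)"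

definition constraint_language :: "'d relation set \<Rightarrow> bool" where
  "constraint_language \<Gamma> \<longleftrightarrow> finite \<Gamma> \<and> (\<forall>R\<in>\<Gamma>. wf_relation R)"

definition csp_instance :: "('v, 'd) csp_inst \<Rightarrow> bool" where
  "csp_instance I \<longleftrightarrow> finite I \<and>
     (\<forall>(S, R)\<in>I. wf_relation R \<and> length S = fst R)"

definition vars :: "('v, 'd) csp_inst \<Rightarrow> 'v set" where
  "vars I = (\<Union>c\<in>I. set (fst c))"

text \<open>Incidence graph: variables Inl x, constraints Inr C.\<close>
definition igV :: "('v, 'd) csp_inst \<Rightarrow> ('v + ('v, 'd) constr) set" where
  "igV I = Inl ` vars I \<union> Inr ` I"

fun igE :: "('v, 'd) csp_inst \<Rightarrow> ('v + ('v, 'd) constr) \<Rightarrow> ('v + ('v, 'd) constr) \<Rightarrow> bool" where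
  "igE I (Inl x) (Inr c) = (c \<in> I \<and> x \<in> set (fst c))"
| "igE I (Inr c) (Inl x) = (c \<in> I \<and> x \<in> set (fst c))"
| "igE I _ _ = False"

text \<open>Restriction of a constraint by an assignment alpha of the variables in X:
  keep tuples consistent with alpha, delete positions of variables in X.\<close>
definition restrict_constr :: "'v set \<Rightarrow> ('v \<Rightarrow> 'd) \<Rightarrow> ('v, 'd) constr \<Rightarrow> ('v, 'd) constr" where
  "restrict_constr X \<alpha> c = (let S = fst c; T = snd (snd c) in
     (filter (\<lambda>x. x \<notin> X) S,
      (length (filter (\<lambda>x. x \<notin> X) S),
       {map snd (filter (\<lambda>p. fst p \<notin> X) (zip S t)) | t.
          t \<in> T \<and> (\<forall>i<length S. S ! i \<in> X \<longrightarrow> t ! i = \<alpha> (S ! i))})))"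

definition restrict_inst :: "'v set \<Rightarrow> ('v \<Rightarrow> 'd) \<Rightarrow> ('v, 'd) csp_inst \<Rightarrow> ('v, 'd) csp_inst" where
  "restrict_inst X \<alpha> I = restrict_constr X \<alpha> ` I"

text \<open>Strong backdoor into CSP(Gamma). Assignments alpha : X -> D are represented by
  total functions; only their values on X matter.\<close>
definition strong_backdoor :: "'d relation set \<Rightarrow> ('v, 'd) csp_inst \<Rightarrow> 'v set \<Rightarrow> bool" where
  "strong_backdoor \<Gamma> I X \<longleftrightarrow> X \<subseteq> vars I \<and>
     (\<forall>\<alpha>. \<forall>c\<in>restrict_inst X \<alpha> I. snd c \<in> \<Gamma>)"

definition bd_width :: "('v, 'd) csp_inst \<Rightarrow> 'v set \<Rightarrow> int" where
  "bd_width I X = torso_width (igV I) (igE I) (Inl ` X)"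

definition separation :: "('v, 'd) csp_inst \<Rightarrow> nat \<Rightarrow> nat \<Rightarrow>
    ('v + ('v, 'd) constr) set \<Rightarrow> ('v + ('v, 'd) constr) set \<Rightarrow> ('v + ('v, 'd) constr) set \<Rightarrow> bool" where
  "separation I q k A S B \<longleftrightarrow>
     A \<union> S \<union> B = igV I \<and> A \<inter> S = {} \<and> A \<inter> B = {} \<and> S \<inter> B = {} \<and>
     S \<subseteq> Inl ` vars I \<and>
     nbh (igV I) (igE I) A \<subseteq> S \<and> nbh (igV I) (igE I) B \<subseteq> S \<and>
     card S \<le> k \<and> card A \<ge> q \<and> card B \<ge> q"

definition has_separation :: "('v, 'd) csp_inst \<Rightarrow> nat \<Rightarrow> nat \<Rightarrow> bool" where
  "has_separation I q k \<longleftrightarrow> (\<exists>A S B. separation I q k A S B)"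

definition nice :: "'d relation set \<Rightarrow> ('v, 'd) csp_inst \<Rightarrow> nat \<Rightarrow> nat \<Rightarrow> bool" where
  "nice \<Gamma> I \<beta> k \<longleftrightarrow>
     treewidth (igV I) (igE I) \<le> int \<beta> + int k \<or>
     ((\<exists>X. strong_backdoor \<Gamma> I X \<and> bd_width I X \<le> int k) \<longrightarrow>
      (\<exists>X. strong_backdoor \<Gamma> I X \<and> bd_width I X \<le> int k \<and>
         (\<exists>C \<in> comps (igV I) (igE I) (Inl ` X).
            card C \<ge> \<beta> + 1 \<and>
            (\<forall>C' \<in> comps (igV I) (igE I) (Inl ` X). card C' \<ge> \<beta> + 1 \<longrightarrow> C' = C) \<and>
            card (igV I - cnbh (igV I) (igE I) C) \<le> \<beta>)))"

end

theory Submission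
  imports Defs
begin

definition crel :: "('a \<Rightarrow> 'a \<Rightarrow> bool) \<Rightarrow> 'a set \<Rightarrow> ('a \<times> 'a) set" where
  "crel E S = {(a, b). a \<in> S \<and> b \<in> S \<and> E a b}"

lemma conn_in_crel: "conn_in E S \<longleftrightarrow> (\<forall>x\<in>S. \<forall>y\<in>S. (x, y) \<in> (crel E S)\<^sup>*)"
  unfolding conn_in_def crel_def by simp

lemma crel_mono: "S \<subseteq> T \<Longrightarrow> (\<And>a b. a \<in> S \<Longrightarrow> b \<in> S \<Longrightarrow> E a b \<Longrightarrow> E' a b) \<Longrightarrow>
   (crel E S)\<^sup>* \<subseteq> (crel E' T)\<^sup>*"
  by (rule rtrancl_mono) (auto simp: crel_def)

lemma conn_cong: "(\<And>a b. a \<in> S \<Longrightarrow> b \<in> S \<Longrightarrow> E a b = E' a b) \<Longrightarrow> conn_in E S = conn_in E' S"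
proof -
  assume h: "\<And>a b. a \<in> S \<Longrightarrow> b \<in> S \<Longrightarrow> E a b = E' a b"
  then have "crel E S = crel E' S" unfolding crel_def by auto
  then show ?thesis by (simp add: conn_in_crel)
qed

lemma conn_mono_E: "conn_in E S \<Longrightarrow> (\<And>a b. a \<in> S \<Longrightarrow> b \<in> S \<Longrightarrow> E a b \<Longrightarrow> E' a b) \<Longrightarrow> conn_in E' S"
  unfolding conn_in_crel using crel_mono[of S S E E'] by blast

lemma conn_single: "conn_in E {x}"
  unfolding conn_in_crel by simp

lemma conn_union_overlap:
  assumes "conn_in E A" "conn_in E B" "z \<in> A" "z \<in> B"
  shows "conn_in E (A \<union> B)"
proof -
  have mA: "(crel E A)\<^sup>* \<subseteq> (crel E (A \<union> B))\<^sup>*" by (rule crel_mono) auto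
  have mB: "(crel E B)\<^sup>* \<subseteq> (crel E (A \<union> B))\<^sup>*" by (rule crel_mono) auto
  have a: "(x, z) \<in> (crel E (A \<union> B))\<^sup>* \<and> (z, x) \<in> (crel E (A \<union> B))\<^sup>*" if "x \<in> A \<union> B" for x
    using that assms mA mB unfolding conn_in_crel by blast
  show ?thesis unfolding conn_in_crel using a by (meson rtrancl_trans)
qed

lemma conn_attach:
  assumes "conn_in E S" "\<forall>t\<in>T. \<exists>s\<in>S. E t s \<and> E s t"
  shows "conn_in E (S \<union> T)"
proof -
  have mS: "(crel E S)\<^sup>* \<subseteq> (crel E (S \<union> T))\<^sup>*" by (rule crel_mono) auto
  have a: "\<exists>s\<in>S. (x, s) \<in> (crel E (S \<union> T))\<^sup>* \<and> (s, x) \<in> (crel E (S \<union> T))\<^sup>*" if "x \<in> S \<union> T" for x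
  proof (cases "x \<in> S")
    case True then show ?thesis by blast
  next
    case False
    then have "x \<in> T" using that by blast
    then obtain s where "s \<in> S" "E x s" "E s x" using assms(2) by blast
    then have "(x, s) \<in> crel E (S \<union> T)" "(s, x) \<in> crel E (S \<union> T)"
      using \<open>x \<in> T\<close> unfolding crel_def by auto
    then show ?thesis using \<open>s \<in> S\<close> by blast
  qed
  show ?thesis unfolding conn_in_crel
  proof (intro ballI)
    fix x y assume "x \<in> S \<union> T" "y \<in> S \<union> T"
    then obtain s1 s2 where "s1 \<in> S" "s2 \<in> S" "(x, s1) \<in> (crel E (S \<union> T))\<^sup>*"
      "(s2, y) \<in> (crel E (S \<union> T))\<^sup>*" using a by blast
    moreover have "(s1, s2) \<in> (crel E (S \<union> T))\<^sup>*" using assms(1) mS \<open>s1 \<in> S\<close> \<open>s2 \<in> S\<close>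
      unfolding conn_in_crel by blast
    ultimately show "(x, y) \<in> (crel E (S \<union> T))\<^sup>*" by (meson rtrancl_trans)
  qed
qed

lemma conn_remove_leaf:
  assumes "conn_in E S" "\<And>s. s \<in> S \<Longrightarrow> E s l \<Longrightarrow> s = p" "\<And>s. s \<in> S \<Longrightarrow> E l s \<Longrightarrow> s = p"
  shows "conn_in E (S - {l})"
proof -
  let ?R = "crel E S" and ?R' = "crel E (S - {l})"
  have key: "(y = l \<and> (x, p) \<in> ?R'\<^sup>*) \<or> (y \<noteq> l \<and> (x, y) \<in> ?R'\<^sup>*)"
    if "x \<in> S - {l}" "(x, y) \<in> ?R\<^sup>*" for x y
    using that(2)
  proof (induction rule: rtrancl_induct)
    case base then show ?case using that(1) by auto
  next
    case (step y z)
    then have yz: "y \<in> S" "z \<in> S" "E y z" unfolding crel_def by auto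
    show ?case
    proof (cases "y = l")
      case True
      then have "z = l \<or> z = p" using yz assms(3) by blast
      then show ?thesis using step.IH True by auto
    next
      case False
      then have xy: "(x, y) \<in> ?R'\<^sup>*" using step.IH by auto
      show ?thesis
      proof (cases "z = l")
        case True
        then have "y = p" using yz assms(2) by blast
        then show ?thesis using xy True by auto
      next
        case False
        then have "(y, z) \<in> ?R'" using yz \<open>y \<noteq> l\<close> unfolding crel_def by auto
        then show ?thesis using xy False by (meson rtrancl.rtrancl_into_rtrancl)
      qed
    qed
  qed
  show ?thesis unfolding conn_in_crel
  proof (intro ballI)
    fix x y assume "x \<in> S - {l}" "y \<in> S - {l}"
    then have "(x, y) \<in> ?R\<^sup>*" using assms(1) unfolding conn_in_crel by blast
    then show "(x, y) \<in> ?R'\<^sup>*" using key \<open>x \<in> S - {l}\<close> \<open>y \<in> S - {l}\<close> by blast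
  qed
qed

definition two_sets :: "'a set \<Rightarrow> 'a set set" where
  "two_sets N = {{a, b} | a b. a \<in> N \<and> b \<in> N \<and> a \<noteq> b}"

lemma handshake:
  assumes "finite N" "TE \<subseteq> two_sets N"
  shows "(\<Sum>t\<in>N. card {e\<in>TE. t \<in> e}) = 2 * card TE"
proof -
  have fTE: "finite TE" using assms unfolding two_sets_def
    by (rule_tac finite_subset[of _ "Pow N"]) (auto intro: finite_Pow_iff[THEN iffD2])
  have "(\<Sum>t\<in>N. card {e\<in>TE. t \<in> e}) = (\<Sum>t\<in>N. \<Sum>e\<in>TE. if t \<in> e then 1 else 0)"
    by (rule sum.cong) (simp_all add: sum.inter_filter[symmetric] fTE)
  also have "\<dots> = (\<Sum>e\<in>TE. \<Sum>t\<in>N. if t \<in> e then 1 else 0)" by (rule sum.swap)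
  also have "\<dots> = (\<Sum>e\<in>TE. card {t\<in>N. t \<in> e})"
    by (rule sum.cong) (simp_all add: sum.inter_filter[symmetric] assms(1))
  also have "\<dots> = (\<Sum>e\<in>TE. 2)"
  proof (rule sum.cong)
    fix e assume "e \<in> TE"
    then obtain a b where "e = {a, b}" "a \<in> N" "b \<in> N" "a \<noteq> b" using assms(2) unfolding two_sets_def by blast
    then have "{t\<in>N. t \<in> e} = {a, b}" by auto
    then show "card {t\<in>N. t \<in> e} = 2" using \<open>a \<noteq> b\<close> by simp
  qed simp
  finally show ?thesis by simp
qed

lemma tree_leaf:
  assumes "finite N" "TE \<subseteq> two_sets N" "card TE + 1 = card N"
    "conn_in (\<lambda>a b. {a, b} \<in> TE) N" "card N \<ge> 2"
  shows "\<exists>l p. l \<in> N \<and> p \<in> N \<and> l \<noteq> p \<and> {l, p} \<in> TE \<and> (\<forall>e\<in>TE. l \<in> e \<longrightarrow> e = {l, p})"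
proof -
  have fTE: "finite TE" using assms unfolding two_sets_def
    by (rule_tac finite_subset[of _ "Pow N"]) (auto intro: finite_Pow_iff[THEN iffD2])
  have "\<exists>l\<in>N. card {e\<in>TE. l \<in> e} \<le> 1"
  proof (rule ccontr)
    assume "\<not> ?thesis"
    then have "\<forall>t\<in>N. 2 \<le> card {e\<in>TE. t \<in> e}" by force
    then have "(\<Sum>t\<in>N. (2::nat)) \<le> (\<Sum>t\<in>N. card {e\<in>TE. t \<in> e})" using sum_mono[of N "\<lambda>_. (2::nat)" "\<lambda>t. card {e\<in>TE. t \<in> e}"] by blast
    then show False using handshake[OF assms(1,2)] assms(3) by simp
  qed
  then obtain l where l: "l \<in> N" "card {e\<in>TE. l \<in> e} \<le> 1" by blast
  have "\<exists>t\<in>N. t \<noteq> l"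
  proof (rule ccontr)
    assume "\<not> ?thesis"
    then have "N \<subseteq> {l}" by blast
    then have "card N \<le> 1" using card_mono[of "{l}" N] by (simp add: card_mono)
    then show False using assms(5) by simp
  qed
  then obtain t where t: "t \<in> N" "t \<noteq> l" by blast
  have "(l, t) \<in> (crel (\<lambda>a b. {a, b} \<in> TE) N)\<^sup>*" using assms(4) l t unfolding conn_in_crel by blast
  then obtain p where p: "(l, p) \<in> crel (\<lambda>a b. {a, b} \<in> TE) N"
    using t(2) by (metis converse_rtranclE)
  then have p2: "p \<in> N" "{l, p} \<in> TE" unfolding crel_def by auto
  then have "l \<noteq> p" using assms(2) unfolding two_sets_def by (auto simp: doubleton_eq_iff)
  have sub: "{{l, p}} \<subseteq> {e\<in>TE. l \<in> e}" using p2 by auto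
  have fin: "finite {e\<in>TE. l \<in> e}" using fTE by simp
  have "{e\<in>TE. l \<in> e} = {{l, p}}"
    using card_seteq[OF fin sub] l(2) by simp
  then show ?thesis using l p2 \<open>l \<noteq> p\<close> by blast
qed

lemma finite_two_sets: "finite N \<Longrightarrow> TE \<subseteq> two_sets N \<Longrightarrow> finite TE"
  unfolding two_sets_def
  by (rule finite_subset[of _ "Pow N"]) (auto intro: finite_Pow_iff[THEN iffD2])

lemma two_sets_card: "e \<in> two_sets N \<Longrightarrow> card e = 2"
  unfolding two_sets_def by auto

lemma helly_core:
  "finite N \<Longrightarrow> N \<noteq> {} \<Longrightarrow> TE \<subseteq> two_sets N \<Longrightarrow> card TE + 1 = card N \<Longrightarrow>
    conn_in (\<lambda>a b. {a, b} \<in> TE) N \<Longrightarrow>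
    \<forall>v\<in>K. conn_in (\<lambda>a b. {a, b} \<in> TE) {t\<in>N. v \<in> bag t} \<Longrightarrow>
    \<forall>u\<in>K. \<forall>v\<in>K. \<exists>t\<in>N. u \<in> bag t \<and> v \<in> bag t \<Longrightarrow>
    \<exists>t\<in>N. K \<subseteq> bag t"
proof (induction "card N" arbitrary: N TE rule: less_induct)
  case less
  note fN = less.prems(1) and ne = less.prems(2) and sub = less.prems(3) and cd = less.prems(4)
    and cN = less.prems(5) and cK = less.prems(6) and pr = less.prems(7)
  show ?case
  proof (cases "card N \<ge> 2")
    case False
    then have "card N = 1" using ne fN using card_gt_0_iff[of N] by linarith
    then obtain t where "N = {t}" by (auto simp: card_Suc_eq)
    then show ?thesis using pr by auto
  next
    case True
    obtain l p where lp: "l \<in> N" "p \<in> N" "l \<noteq> p" "{l, p} \<in> TE" "\<forall>e\<in>TE. l \<in> e \<longrightarrow> e = {l, p}"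
      using tree_leaf[OF fN sub cd cN True] by blast
    have nbr: "s = p" if "s \<in> N" "{l, s} \<in> TE" for s
    proof -
      have "{l, s} = {l, p}" using lp(5) that(2) by (metis insertI1)
      moreover have "s \<noteq> l"
      proof
        assume "s = l"
        have "card {l, s} = 2" using that(2) sub two_sets_card by (meson subsetD)
        then show False using \<open>s = l\<close> by simp
      qed
      ultimately show ?thesis by (auto simp: doubleton_eq_iff)
    qed
    show ?thesis
    proof (cases "K \<subseteq> bag l")
      case True then show ?thesis using lp by blast
    next
      case False
      then obtain w where w: "w \<in> K" "w \<notin> bag l" by blast
      have cl: "u \<in> bag p" if "u \<in> K" "u \<in> bag l" for u
      proof -
        have "\<exists>t\<in>N. u \<in> bag t \<and> w \<in> bag t" using pr that(1) w(1) by simp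
        then obtain t where t: "t \<in> N" "u \<in> bag t" "w \<in> bag t" by blast
        have "t \<noteq> l" using t(3) w(2) by metis
        have cu: "conn_in (\<lambda>a b. {a, b} \<in> TE) {t\<in>N. u \<in> bag t}" using cK that(1) by blast
        have "l \<in> {t\<in>N. u \<in> bag t}" "t \<in> {t\<in>N. u \<in> bag t}" using lp(1) that(2) t by auto
        then have "(l, t) \<in> (crel (\<lambda>a b. {a, b} \<in> TE) {t\<in>N. u \<in> bag t})\<^sup>*"
          using cu unfolding conn_in_crel by blast
        then have "\<exists>s. (l, s) \<in> crel (\<lambda>a b. {a, b} \<in> TE) {t\<in>N. u \<in> bag t}"
        proof (cases rule: converse_rtranclE)
          case base then show ?thesis using \<open>t \<noteq> l\<close> by simp
        next
          case (step s) then show ?thesis by blast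
        qed
        then obtain s where "(l, s) \<in> crel (\<lambda>a b. {a, b} \<in> TE) {t\<in>N. u \<in> bag t}" by blast
        then have "s \<in> N" "u \<in> bag s" "{l, s} \<in> TE" unfolding crel_def by auto
        then show ?thesis using nbr by blast
      qed
      define TE' where "TE' = TE - {{l, p}}"
      have eq: "({a, b} \<in> TE) = ({a, b} \<in> TE')" if "a \<noteq> l" "b \<noteq> l" for a b
      proof -
        have "{a, b} \<noteq> {l, p}"
        proof
          assume "{a, b} = {l, p}"
          then have "l \<in> {a, b}" by simp
          with that show False by simp
        qed
        then show ?thesis unfolding TE'_def by simp
      qed
      have nbr1: "s = p" if "s \<in> N" "{s, l} \<in> TE" for s
      proof -
        have "{l, s} = {s, l}" by blast
        then show ?thesis using nbr[OF that(1)] that(2) by simp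
      qed
      have c1: "conn_in (\<lambda>a b. {a, b} \<in> TE') (N - {l})"
      proof -
        have "conn_in (\<lambda>a b. {a, b} \<in> TE) (N - {l})"
          by (rule conn_remove_leaf[OF cN]) (blast intro: nbr nbr1)+
        moreover have "conn_in (\<lambda>a b. {a, b} \<in> TE) (N - {l}) = conn_in (\<lambda>a b. {a, b} \<in> TE') (N - {l})"
          by (rule conn_cong) (use eq in blast)
        ultimately show ?thesis by simp
      qed
      have c2: "\<forall>v\<in>K. conn_in (\<lambda>a b. {a, b} \<in> TE') {t\<in>N - {l}. v \<in> bag t}"
      proof
        fix v assume "v \<in> K"
        have "conn_in (\<lambda>a b. {a, b} \<in> TE) ({t\<in>N. v \<in> bag t} - {l})"
          by (rule conn_remove_leaf[OF cK[rule_format, OF \<open>v \<in> K\<close>]]) (blast intro: nbr nbr1)+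
        moreover have "{t\<in>N - {l}. v \<in> bag t} = {t\<in>N. v \<in> bag t} - {l}" by auto
        moreover have "conn_in (\<lambda>a b. {a, b} \<in> TE) ({t\<in>N. v \<in> bag t} - {l}) = conn_in (\<lambda>a b. {a, b} \<in> TE') ({t\<in>N. v \<in> bag t} - {l})"
          by (rule conn_cong) (use eq in blast)
        ultimately show "conn_in (\<lambda>a b. {a, b} \<in> TE') {t\<in>N - {l}. v \<in> bag t}" by simp
      qed
      have c3: "\<forall>u\<in>K. \<forall>v\<in>K. \<exists>t\<in>N - {l}. u \<in> bag t \<and> v \<in> bag t"
      proof (intro ballI)
        fix u v assume "u \<in> K" "v \<in> K"
        then have "\<exists>t\<in>N. u \<in> bag t \<and> v \<in> bag t" using pr by simp
        then obtain t where t: "t \<in> N" "u \<in> bag t" "v \<in> bag t" by blast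
        show "\<exists>t\<in>N - {l}. u \<in> bag t \<and> v \<in> bag t"
        proof (cases "t = l")
          case True
          then have "u \<in> bag p" "v \<in> bag p" using cl \<open>u \<in> K\<close> \<open>v \<in> K\<close> t by auto
          then show ?thesis using lp by blast
        next
          case False then show ?thesis using t by blast
        qed
      qed
      have s4: "TE' \<subseteq> two_sets (N - {l})"
      proof
        fix e assume "e \<in> TE'"
        then have "e \<in> TE" "e \<noteq> {l, p}" unfolding TE'_def by auto
        then obtain a b where "e = {a, b}" "a \<in> N" "b \<in> N" "a \<noteq> b" using sub unfolding two_sets_def by blast
        moreover have "l \<notin> e" using lp(5) \<open>e \<in> TE\<close> \<open>e \<noteq> {l, p}\<close> by blast
        ultimately have "e = {a, b} \<and> a \<in> N - {l} \<and> b \<in> N - {l} \<and> a \<noteq> b" by blast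
        then show "e \<in> two_sets (N - {l})" unfolding two_sets_def by blast
      qed
      have fTE: "finite TE" using finite_two_sets[OF fN sub] .
      have c5: "card TE' + 1 = card (N - {l})"
      proof -
        have "card TE' = card TE - 1" unfolding TE'_def using card_Diff_singleton[OF lp(4)] .
        moreover have "card (N - {l}) = card N - 1" using card_Diff_singleton[OF lp(1)] .
        moreover have "card TE \<ge> 1" using True cd by linarith
        ultimately show ?thesis using cd by linarith
      qed
      have c6: "N - {l} \<noteq> {}" using lp by blast
      have lt: "card (N - {l}) < card N" using card_Diff1_less[OF fN lp(1)] .
      have fin: "finite (N - {l})" using fN by simp
      have "\<exists>t\<in>N - {l}. K \<subseteq> bag t" by (rule less.hyps[OF lt fin c6 s4 c5 c1 c2 c3])
      then show ?thesis by blast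
    qed
  qed
qed

lemma helly:
  assumes "tree_decomp V E N TE bag" "K \<subseteq> V" "\<forall>u\<in>K. \<forall>v\<in>K. u \<noteq> v \<longrightarrow> E u v"
  shows "\<exists>t\<in>N. K \<subseteq> bag t"
proof -
  have T: "is_tree N TE" and cv: "\<forall>v\<in>V. \<exists>t\<in>N. v \<in> bag t"
    and ed: "\<forall>u\<in>V. \<forall>v\<in>V. E u v \<longrightarrow> (\<exists>t\<in>N. u \<in> bag t \<and> v \<in> bag t)"
    and cn: "\<forall>v\<in>V. conn_in (\<lambda>a b. {a, b} \<in> TE) {t \<in> N. v \<in> bag t}"
    using assms(1) unfolding tree_decomp_def by auto
  show ?thesis
  proof (rule helly_core)
    show "finite N" "N \<noteq> {}" "TE \<subseteq> two_sets N" "card TE + 1 = card N"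
      "conn_in (\<lambda>a b. {a, b} \<in> TE) N" using T unfolding is_tree_def two_sets_def by auto
    show "\<forall>v\<in>K. conn_in (\<lambda>a b. {a, b} \<in> TE) {t \<in> N. v \<in> bag t}"
      using cn assms(2) by blast
    show "\<forall>u\<in>K. \<forall>v\<in>K. \<exists>t\<in>N. u \<in> bag t \<and> v \<in> bag t"
    proof (intro ballI)
      fix u v assume "u \<in> K" "v \<in> K"
      show "\<exists>t\<in>N. u \<in> bag t \<and> v \<in> bag t"
      proof (cases "u = v")
        case True then show ?thesis using cv assms(2) \<open>u \<in> K\<close> by blast
      next
        case False then show ?thesis using ed assms(2,3) \<open>u \<in> K\<close> \<open>v \<in> K\<close> by blast
      qed
    qed
  qed
qed


lemma tw_single: "\<exists>N TE bag. tree_decomp V E N TE bag \<and> (\<forall>t\<in>N. card (bag t) \<le> card V)"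
proof -
  have "tree_decomp V E {0} {} (\<lambda>_. V)"
    unfolding tree_decomp_def is_tree_def by (auto simp: conn_single)
  then show ?thesis by fastforce
qed

lemma tw_le_obtain:
  assumes "treewidth V E \<le> int k"
  obtains N TE bag where "tree_decomp V E N TE bag" "\<forall>t\<in>N. card (bag t) \<le> k + 1"
proof -
  let ?P = "\<lambda>m. \<exists>N TE bag. tree_decomp V E N TE bag \<and> (\<forall>t\<in>N. card (bag t) \<le> m)"
  have "?P (card V)" by (rule tw_single)
  then have "?P (LEAST m. ?P m)" by (rule LeastI)
  moreover have "(LEAST m. ?P m) \<le> k + 1" using assms unfolding treewidth_def by linarith
  ultimately show ?thesis using that by (meson order_trans)
qed

lemma tw_ge:
  assumes "tree_decomp V E N TE bag" "\<forall>t\<in>N. card (bag t) \<le> m"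
  shows "treewidth V E \<le> int m - 1"
proof -
  let ?P = "\<lambda>m. \<exists>N TE bag. tree_decomp V E N TE bag \<and> (\<forall>t\<in>N. card (bag t) \<le> m)"
  have "?P m" using assms by blast
  then have "(LEAST m. ?P m) \<le> m" by (rule Least_le)
  then show ?thesis unfolding treewidth_def by linarith
qed

lemma comp_disjoint:
  assumes "C1 \<in> comps V E X" "C2 \<in> comps V E X" "x \<in> C1" "x \<in> C2"
  shows "C1 = C2"
proof -
  have c1: "C1 \<subseteq> V - X" "conn_in E C1" "\<forall>D. C1 \<subseteq> D \<and> D \<subseteq> V - X \<and> conn_in E D \<longrightarrow> D = C1"
    using assms(1) unfolding comps_def by auto
  have c2: "C2 \<subseteq> V - X" "conn_in E C2" "\<forall>D. C2 \<subseteq> D \<and> D \<subseteq> V - X \<and> conn_in E D \<longrightarrow> D = C2"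
    using assms(2) unfolding comps_def by auto
  have u: "conn_in E (C1 \<union> C2)" by (rule conn_union_overlap[OF c1(2) c2(2) assms(3,4)])
  have "C1 \<union> C2 = C1" using c1(3) u c1(1) c2(1) by blast
  moreover have "C1 \<union> C2 = C2" using c2(3) u c1(1) c2(1) by blast
  ultimately show ?thesis by simp
qed

lemma comp_nbh:
  assumes sym: "\<And>a b. E a b = E b a" and C: "C \<in> comps V E X" and v: "v \<in> nbh V E C"
  shows "v \<in> X"
proof (rule ccontr)
  assume "v \<notin> X"
  have c: "C \<subseteq> V - X" "conn_in E C" "\<forall>D. C \<subseteq> D \<and> D \<subseteq> V - X \<and> conn_in E D \<longrightarrow> D = C"
    using C unfolding comps_def by auto
  obtain a where a: "a \<in> C" "E a v" "v \<in> V" "v \<notin> C" using v unfolding nbh_def by blast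
  have "conn_in E (C \<union> {v})"
    by (rule conn_attach[OF c(2)]) (use a sym in blast)
  moreover have "C \<union> {v} \<subseteq> V - X" using c(1) a(3) \<open>v \<notin> X\<close> by blast
  ultimately have "C \<union> {v} = C" using c(3) by blast
  then show False using a(4) by blast
qed

lemma comp_adj:
  assumes sym: "\<And>a b. E a b = E b a" and C: "C \<in> comps V E X"
    and "u \<in> C" "v \<in> V" "v \<notin> X" "E u v"
  shows "v \<in> C"
proof (rule ccontr)
  assume "v \<notin> C"
  then have "v \<in> nbh V E C" unfolding nbh_def using assms by blast
  then show False using comp_nbh[OF sym C] assms(5) by blast
qed

lemma comp_exists:
  assumes sym: "\<And>a b. E a b = E b a" and v: "v \<in> V" "v \<notin> X"
  shows "\<exists>C\<in>comps V E X. v \<in> C"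
proof -
  let ?W = "V - X"
  let ?R = "crel E ?W"
  define C where "C = {w. (v, w) \<in> ?R\<^sup>*}"
  have vC: "v \<in> C" unfolding C_def by simp
  have CW: "C \<subseteq> ?W"
  proof
    fix w assume "w \<in> C"
    then have "(v, w) \<in> ?R\<^sup>*" unfolding C_def by simp
    then show "w \<in> ?W"
      by (induction rule: rtrancl_induct) (use v in \<open>auto simp: crel_def\<close>)
  qed
  have inC: "(v, w) \<in> (crel E C)\<^sup>*" if "(v, w) \<in> ?R\<^sup>*" for w
    using that
  proof (induction rule: rtrancl_induct)
    case base then show ?case by simp
  next
    case (step y z)
    then have "y \<in> C" "z \<in> C" unfolding C_def by auto
    moreover have "E y z" using step(2) unfolding crel_def by auto
    ultimately have "(y, z) \<in> crel E C" unfolding crel_def by auto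
    then show ?case using step(3) by (meson rtrancl.rtrancl_into_rtrancl)
  qed
  have symR: "sym ((crel E C)\<^sup>*)"
    by (rule sym_rtrancl) (use sym in \<open>auto simp: sym_def crel_def\<close>)
  have connC: "conn_in E C" unfolding conn_in_crel
  proof (intro ballI)
    fix x y assume "x \<in> C" "y \<in> C"
    then have "(v, x) \<in> (crel E C)\<^sup>*" "(v, y) \<in> (crel E C)\<^sup>*" using inC unfolding C_def by auto
    then have "(x, v) \<in> (crel E C)\<^sup>*" "(v, y) \<in> (crel E C)\<^sup>*" using symR unfolding sym_def by auto
    then show "(x, y) \<in> (crel E C)\<^sup>*" by (meson rtrancl_trans)
  qed
  have maxC: "D = C" if "C \<subseteq> D" "D \<subseteq> ?W" "conn_in E D" for D
  proof
    show "D \<subseteq> C"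
    proof
      fix d assume "d \<in> D"
      then have "(v, d) \<in> (crel E D)\<^sup>*" using that(1,3) vC unfolding conn_in_crel by blast
      moreover have "(crel E D)\<^sup>* \<subseteq> ?R\<^sup>*" by (rule crel_mono) (use that(2) in auto)
      ultimately show "d \<in> C" unfolding C_def by blast
    qed
  qed (rule that(1))
  have "C \<in> comps V E X" unfolding comps_def using vC CW connC maxC by blast
  then show ?thesis using vC by blast
qed

lemma igE_sym: "igE I a b = igE I b a"
  by (cases a; cases b) auto

lemma igE_Inl_Inl: "\<not> igE I (Inl a) (Inl b)"
  by simp

lemma finite_igV: "csp_instance I \<Longrightarrow> finite (igV I)"
  unfolding csp_instance_def igV_def vars_def by auto

lemma nbh_in_bag:
  assumes sym: "\<And>a b. E a b = E b a" and XXV: "XX \<subseteq> V"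
    and td: "tree_decomp XX (torsoE V E XX) N TE bag" and C: "C \<in> comps V E XX"
  shows "\<exists>t\<in>N. nbh V E C \<subseteq> bag t"
proof (rule helly[OF td])
  show K: "nbh V E C \<subseteq> XX" using comp_nbh[OF sym C] by blast
  show "\<forall>u\<in>nbh V E C. \<forall>v\<in>nbh V E C. u \<noteq> v \<longrightarrow> torsoE V E XX u v"
  proof (intro ballI impI)
    fix u v assume u: "u \<in> nbh V E C" and v: "v \<in> nbh V E C" and "u \<noteq> v"
    obtain a where "a \<in> C" "E a u" using u unfolding nbh_def by blast
    moreover obtain b where "b \<in> C" "E b v" using v unfolding nbh_def by blast
    ultimately have "\<exists>a\<in>C. E u a" "\<exists>b\<in>C. E v b" using sym by blast+
    then show "torsoE V E XX u v" unfolding torsoE_def using K u v \<open>u \<noteq> v\<close> C by blast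
  qed
qed

lemma sep_from_comp:
  assumes C: "C \<in> comps (igV I) (igE I) XX" and XX: "XX \<subseteq> Inl ` vars I"
    and k: "card (nbh (igV I) (igE I) C) \<le> k + 1"
    and q1: "card C \<ge> q" and q2: "card (igV I - cnbh (igV I) (igE I) C) \<ge> q"
  shows "has_separation I q (k + 1)"
proof -
  let ?V = "igV I" and ?E = "igE I"
  let ?S = "nbh ?V ?E C" and ?B = "?V - cnbh ?V ?E C"
  have sym: "\<And>a b. ?E a b = ?E b a" by (rule igE_sym)
  have CV: "C \<subseteq> ?V" using C unfolding comps_def by blast
  have SX: "?S \<subseteq> XX" using comp_nbh[OF sym C] by blast
  have CX: "C \<inter> XX = {}" using C unfolding comps_def by blast
  have SV: "?S \<subseteq> ?V" unfolding nbh_def by blast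
  have nB: "nbh ?V ?E ?B \<subseteq> ?S"
  proof
    fix v assume v: "v \<in> nbh ?V ?E ?B"
    then obtain b where b: "b \<in> ?B" "?E b v" "v \<in> ?V" "v \<notin> ?B" unfolding nbh_def by blast
    then have "v \<in> C \<or> v \<in> ?S" unfolding cnbh_def by blast
    moreover have "v \<notin> C"
    proof
      assume "v \<in> C"
      then have "b \<in> C \<or> b \<in> ?S" unfolding nbh_def using b sym by blast
      then show False using b(1) unfolding cnbh_def by blast
    qed
    ultimately show "v \<in> ?S" by blast
  qed
  have "separation I q (k + 1) C ?S ?B"
    unfolding separation_def
  proof (intro conjI)
    show "C \<union> ?S \<union> ?B = ?V" using CV SV unfolding cnbh_def by blast
    show "C \<inter> ?S = {}" unfolding nbh_def by blast
    show "C \<inter> ?B = {}" unfolding cnbh_def by blast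
    show "?S \<inter> ?B = {}" unfolding cnbh_def by blast
    show "?S \<subseteq> Inl ` vars I" using SX XX by blast
    show "?S \<subseteq> ?S" by blast
    show "nbh ?V ?E ?B \<subseteq> ?S" by (rule nB)
    show "card ?S \<le> k + 1" by (rule k)
    show "q \<le> card C" by (rule q1)
    show "q \<le> card ?B" by (rule q2)
  qed
  then show ?thesis unfolding has_separation_def by blast
qed

lemma tw_from_torso:
  assumes finV: "finite V" and sym: "\<And>a b. E a b = E b a" and XXV: "XX \<subseteq> V"
    and noXX: "\<And>u v. u \<in> XX \<Longrightarrow> v \<in> XX \<Longrightarrow> \<not> E u v"
    and td: "tree_decomp XX (torsoE V E XX) N TE bag" and bd: "\<forall>t\<in>N. card (bag t) \<le> k + 1"
    and small: "\<forall>C\<in>comps V E XX. card C \<le> q"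
    and nbc: "\<forall>C\<in>comps V E XX. card (nbh V E C) \<le> k + 1"
  shows "treewidth V E \<le> int q + int k"
proof -
  define Cs where "Cs = comps V E XX"
  have finCs: "finite Cs" unfolding Cs_def comps_def
    by (rule finite_subset[of _ "Pow V"]) (use finV in auto)
  have CsV: "C \<subseteq> V - XX" if "C \<in> Cs" for C using that unfolding Cs_def comps_def by blast
  have "\<forall>C\<in>Cs. \<exists>t\<in>N. nbh V E C \<subseteq> bag t"
    using nbh_in_bag[OF sym XXV td] unfolding Cs_def by blast
  then obtain tC where tC: "\<forall>C\<in>Cs. tC C \<in> N \<and> nbh V E C \<subseteq> bag (tC C)" by metis
  define c where "c = card Cs"
  obtain h where h: "bij_betw h {0..<c} Cs" unfolding c_def using ex_bij_betw_nat_finite[OF finCs] by blast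
  have hC: "h i \<in> Cs" if "i < c" for i using h that unfolding bij_betw_def by auto
  have hsurj: "\<exists>i<c. h i = C" if "C \<in> Cs" for C
    using h that unfolding bij_betw_def by (metis atLeastLessThan_iff imageE)
  have hinj: "i = j" if "i < c" "j < c" "h i = h j" for i j
    using h that unfolding bij_betw_def inj_on_def by auto
  have T: "is_tree N TE" and bXX: "\<forall>t\<in>N. bag t \<subseteq> XX" and cov: "\<forall>v\<in>XX. \<exists>t\<in>N. v \<in> bag t"
    and cn: "\<forall>v\<in>XX. conn_in (\<lambda>a b. {a, b} \<in> TE) {t \<in> N. v \<in> bag t}"
    using td unfolding tree_decomp_def by auto
  have finN: "finite N" and neN: "N \<noteq> {}" and subTE: "TE \<subseteq> two_sets N"
    and cnN: "conn_in (\<lambda>a b. {a, b} \<in> TE) N" and cdT: "card TE + 1 = card N"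
    using T unfolding is_tree_def two_sets_def by auto
  define M where "M = Suc (Max N)"
  have ltM: "t < M" if "t \<in> N" for t using Max_ge[OF finN that] unfolding M_def by simp
  have tCN: "tC (h i) \<in> N" if "i < c" for i using tC hC[OF that] by blast
  have tCb: "nbh V E (h i) \<subseteq> bag (tC (h i))" if "i < c" for i using tC hC[OF that] by blast
  define new where "new = {M..<M + c}"
  define N' where "N' = N \<union> new"
  define ne where "ne = (\<lambda>i. {M + i, tC (h i)})"
  define TE' where "TE' = TE \<union> ne ` {0..<c}"
  define bag' where "bag' = (\<lambda>t. if t \<in> N then bag t else cnbh V E (h (t - M)))"
  have newN: "N \<inter> new = {}" unfolding new_def using ltM by fastforce
  have bag_new: "bag' (M + i) = cnbh V E (h i)" if "i < c" for i
  proof -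
    have "M + i \<notin> N" using ltM by fastforce
    then show ?thesis unfolding bag'_def by simp
  qed
  have new_iff: "t \<in> new \<longleftrightarrow> (\<exists>i<c. t = M + i)" for t
    unfolding new_def by (auto intro: exI[of _ "t - M"])
  have edge_new: "{M + i, tC (h i)} \<in> TE'" if "i < c" for i
    unfolding TE'_def ne_def using that by auto
  have twoTE': "TE' \<subseteq> two_sets N'"
  proof
    fix e assume "e \<in> TE'"
    then consider "e \<in> TE" | i where "i < c" "e = ne i" unfolding TE'_def by auto
    then show "e \<in> two_sets N'"
    proof cases
      case 1
      then obtain a b where "e = {a, b}" "a \<in> N" "b \<in> N" "a \<noteq> b" using subTE unfolding two_sets_def by blast
      then show ?thesis unfolding two_sets_def N'_def by blast
    next
      case 2
      have "M + i \<in> N'" unfolding N'_def new_def using 2 by auto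
      moreover have "tC (h i) \<in> N'" unfolding N'_def using tCN[OF 2(1)] by blast
      moreover have "M + i \<noteq> tC (h i)" using ltM[OF tCN[OF 2(1)]] by simp
      ultimately show ?thesis unfolding two_sets_def using 2(2) unfolding ne_def by blast
    qed
  qed
  have connN': "conn_in (\<lambda>a b. {a, b} \<in> TE') N'"
  proof -
    have "conn_in (\<lambda>a b. {a, b} \<in> TE') N"
      by (rule conn_mono_E[OF cnN]) (auto simp: TE'_def)
    moreover have "\<forall>t\<in>new. \<exists>s\<in>N. {t, s} \<in> TE' \<and> {s, t} \<in> TE'"
    proof
      fix t assume "t \<in> new"
      then obtain i where i: "i < c" "t = M + i" using new_iff by blast
      have "{t, tC (h i)} \<in> TE'" using edge_new[OF i(1)] i(2) by simp
      moreover have "{tC (h i), t} = {t, tC (h i)}" by blast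
      ultimately show "\<exists>s\<in>N. {t, s} \<in> TE' \<and> {s, t} \<in> TE'" using tCN[OF i(1)] by metis
    qed
    ultimately show ?thesis unfolding N'_def by (rule conn_attach)
  qed
  have finTE: "finite TE" by (rule finite_two_sets[OF finN subTE])
  have cardTE': "card TE' = card TE + c"
  proof -
    have inj: "inj_on ne {0..<c}"
    proof (rule inj_onI)
      fix i j assume ij: "i \<in> {0..<c}" "j \<in> {0..<c}" "ne i = ne j"
      have "M + i \<in> ne j" using ij(3) unfolding ne_def by blast
      moreover have "M + i \<noteq> tC (h j)" using ltM[OF tCN[of j]] ij(2) by simp
      ultimately show "i = j" unfolding ne_def by simp
    qed
    have disj: "TE \<inter> ne ` {0..<c} = {}"
    proof (rule ccontr)
      assume "TE \<inter> ne ` {0..<c} \<noteq> {}"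
      then obtain i where i: "i < c" "ne i \<in> TE" by auto
      then obtain a b where "ne i = {a, b}" "a \<in> N" "b \<in> N" using subTE unfolding two_sets_def by blast
      then have "M + i \<in> {a, b}" unfolding ne_def by (metis insertI1)
      then have "M + i \<in> N" using \<open>a \<in> N\<close> \<open>b \<in> N\<close> by blast
      then show False using ltM by fastforce
    qed
    have "card TE' = card TE + card (ne ` {0..<c})"
      unfolding TE'_def by (rule card_Un_disjoint[OF finTE _ disj]) simp
    also have "card (ne ` {0..<c}) = c" using card_image[OF inj] by simp
    finally show ?thesis .
  qed
  have cardN': "card N' = card N + c"
  proof -
    have "card N' = card N + card new" unfolding N'_def
      by (rule card_Un_disjoint[OF finN _ newN]) (simp add: new_def)
    then show ?thesis unfolding new_def by simp
  qed
  have tree': "is_tree N' TE'"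
    unfolding is_tree_def
  proof (intro conjI)
    show "finite N'" unfolding N'_def new_def using finN by simp
    show "N' \<noteq> {}" unfolding N'_def using neN by blast
    show "TE' \<subseteq> {{a, b} |a b. a \<in> N' \<and> b \<in> N' \<and> a \<noteq> b}" using twoTE' unfolding two_sets_def .
    show "conn_in (\<lambda>a b. {a, b} \<in> TE') N'" by (rule connN')
    show "card TE' + 1 = card N'" using cardTE' cardN' cdT by simp
  qed
  have compv: "\<exists>i<c. v \<in> h i" if vV: "v \<in> V" and vX: "v \<notin> XX" for v
  proof -
    obtain C where "C \<in> Cs" "v \<in> C" using comp_exists[where E=E and V=V and X=XX, OF sym vV vX] unfolding Cs_def by blast
    then show ?thesis using hsurj by blast
  qed
  have nbhXX: "nbh V E (h i) \<subseteq> XX" if "i < c" for i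
    using comp_nbh[where E=E and V=V and X=XX and C="h i", OF sym] hC[OF that] unfolding Cs_def by blast
  have hV: "h i \<subseteq> V - XX" if "i < c" for i using CsV hC that by blast
  have cnbhV: "cnbh V E (h i) \<subseteq> V" if "i < c" for i
    using hV[OF that] unfolding cnbh_def nbh_def by blast
  have edge1: "\<exists>t\<in>N'. u \<in> bag' t \<and> v \<in> bag' t"
    if hyp: "u \<in> V" "v \<in> V" "E u v" "v \<notin> XX" for u v
  proof -
    obtain i where i: "i < c" "v \<in> h i" using compv hyp(2,4) by blast
    have "u \<in> cnbh V E (h i)"
    proof (cases "u \<in> h i")
      case True then show ?thesis unfolding cnbh_def by blast
    next
      case False
      then have "u \<in> nbh V E (h i)" unfolding nbh_def using i(2) hyp(1,3) sym by blast
      then show ?thesis unfolding cnbh_def by blast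
    qed
    moreover have "v \<in> cnbh V E (h i)" using i(2) unfolding cnbh_def by blast
    moreover have "M + i \<in> N'" unfolding N'_def new_def using i(1) by simp
    ultimately show ?thesis using bag_new[OF i(1)] by metis
  qed
  have td': "tree_decomp V E N' TE' bag'"
    unfolding tree_decomp_def
  proof (intro conjI ballI impI)
    show "is_tree N' TE'" by (rule tree')
  next
    fix t assume t: "t \<in> N'"
    show "bag' t \<subseteq> V"
    proof (cases "t \<in> N")
      case True then show ?thesis unfolding bag'_def using bXX XXV by auto
    next
      case False
      then obtain i where i: "i < c" "t = M + i" using t new_iff unfolding N'_def by blast
      then show ?thesis using bag_new cnbhV by simp
    qed
  next
    fix v assume v: "v \<in> V"
    show "\<exists>t\<in>N'. v \<in> bag' t"
    proof (cases "v \<in> XX")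
      case True
      then obtain t where "t \<in> N" "v \<in> bag t" using cov by blast
      then show ?thesis unfolding N'_def bag'_def by auto
    next
      case False
      then obtain i where i: "i < c" "v \<in> h i" using compv v by blast
      have "M + i \<in> N'" unfolding N'_def new_def using i(1) by simp
      moreover have "v \<in> bag' (M + i)" using bag_new[OF i(1)] i(2) unfolding cnbh_def by simp
      ultimately show ?thesis by blast
    qed
  next
    fix u v assume u: "u \<in> V" and v: "v \<in> V" and e: "E u v"
    show "\<exists>t\<in>N'. u \<in> bag' t \<and> v \<in> bag' t"
    proof (cases "v \<in> XX")
      case False then show ?thesis using edge1 u v e by blast
    next
      case True
      then have "u \<notin> XX" using noXX e by blast
      moreover have "E v u" using e sym by blast
      ultimately show ?thesis using edge1[OF v u] by blast
    qed
  next
    fix v assume v: "v \<in> V"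
    show "conn_in (\<lambda>a b. {a, b} \<in> TE') {t \<in> N'. v \<in> bag' t}"
    proof (cases "v \<in> XX")
      case True
      let ?S0 = "{t \<in> N. v \<in> bag t}" and ?T0 = "{t \<in> new. v \<in> bag' t}"
      have eqS: "{t \<in> N'. v \<in> bag' t} = ?S0 \<union> ?T0" unfolding N'_def bag'_def by auto
      have c0: "conn_in (\<lambda>a b. {a, b} \<in> TE') ?S0"
        by (rule conn_mono_E[OF cn[rule_format, OF True]]) (auto simp: TE'_def)
      have "\<forall>t\<in>?T0. \<exists>s\<in>?S0. {t, s} \<in> TE' \<and> {s, t} \<in> TE'"
      proof
        fix t assume t: "t \<in> ?T0"
        then obtain i where i: "i < c" "t = M + i" using new_iff by blast
        have "v \<in> cnbh V E (h i)" using t bag_new[OF i(1)] i(2) by simp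
        moreover have "v \<notin> h i" using hV[OF i(1)] True by blast
        ultimately have "v \<in> nbh V E (h i)" unfolding cnbh_def by blast
        then have "tC (h i) \<in> ?S0" using tCb[OF i(1)] tCN[OF i(1)] by blast
        moreover have "{t, tC (h i)} \<in> TE'" using edge_new[OF i(1)] i(2) by simp
        moreover have "{tC (h i), t} = {t, tC (h i)}" by blast
        ultimately show "\<exists>s\<in>?S0. {t, s} \<in> TE' \<and> {s, t} \<in> TE'" by metis
      qed
      then show ?thesis using conn_attach[OF c0] eqS by simp
    next
      case False
      then obtain i where i: "i < c" "v \<in> h i" using compv v by blast
      have "{t \<in> N'. v \<in> bag' t} = {M + i}"
      proof
        show "{M + i} \<subseteq> {t \<in> N'. v \<in> bag' t}"
          using bag_new[OF i(1)] i unfolding N'_def new_def cnbh_def by simp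
        show "{t \<in> N'. v \<in> bag' t} \<subseteq> {M + i}"
        proof
          fix t assume t: "t \<in> {t \<in> N'. v \<in> bag' t}"
          show "t \<in> {M + i}"
          proof (cases "t \<in> N")
            case True
            then have "v \<in> bag t" using t unfolding bag'_def by simp
            then show ?thesis using bXX True False by blast
          next
            case nN: False
            then obtain j where j: "j < c" "t = M + j" using t new_iff unfolding N'_def by blast
            have "v \<in> cnbh V E (h j)" using t bag_new[OF j(1)] j(2) by simp
            then have "v \<in> h j" using nbhXX[OF j(1)] False unfolding cnbh_def by blast
            then have "h j = h i" using comp_disjoint[of "h j" V E XX "h i" v] hC[OF j(1)] hC[OF i(1)] i(2)
              unfolding Cs_def by blast
            then have "j = i" using hinj[OF j(1) i(1)] by simp
            then show ?thesis using j(2) by simp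
          qed
        qed
      qed
      then show ?thesis by (simp add: conn_single)
    qed
  qed
  have wd: "\<forall>t\<in>N'. card (bag' t) \<le> q + k + 1"
  proof
    fix t assume t: "t \<in> N'"
    show "card (bag' t) \<le> q + k + 1"
    proof (cases "t \<in> N")
      case True then show ?thesis using bd unfolding bag'_def by auto
    next
      case False
      then obtain i where i: "i < c" "t = M + i" using t new_iff unfolding N'_def by blast
      have "card (cnbh V E (h i)) \<le> card (h i) + card (nbh V E (h i))"
        unfolding cnbh_def by (rule card_Un_le)
      moreover have "card (h i) \<le> q" using small hC[OF i(1)] unfolding Cs_def by blast
      moreover have "card (nbh V E (h i)) \<le> k + 1" using nbc hC[OF i(1)] unfolding Cs_def by blast
      ultimately show ?thesis using bag_new[OF i(1)] i(2) by simp
    qed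
  qed
  have "treewidth V E \<le> int (q + k + 1) - 1" by (rule tw_ge[OF td' wd])
  then show ?thesis by simp
qed

theorem lemma11:
  fixes \<Gamma> :: "('d::finite) relation set" and I :: "('v, 'd) csp_inst" and q k :: nat
  assumes "constraint_language \<Gamma>"
    and "csp_instance I"
    and "\<not> has_separation I q (k + 1)"
  shows "nice \<Gamma> I q k"
proof -
  let ?V = "igV I" and ?E = "igE I"
  have finV: "finite ?V" using finite_igV[OF assms(2)] .
  have sym: "\<And>a b. ?E a b = ?E b a" by (rule igE_sym)
  show ?thesis
  proof (cases "treewidth ?V ?E \<le> int q + int k")
    case True then show ?thesis unfolding nice_def by blast
  next
    case False
    have main: "\<exists>X. strong_backdoor \<Gamma> I X \<and> bd_width I X \<le> int k \<and>
         (\<exists>C \<in> comps ?V ?E (Inl ` X).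
            card C \<ge> q + 1 \<and>
            (\<forall>C' \<in> comps ?V ?E (Inl ` X). card C' \<ge> q + 1 \<longrightarrow> C' = C) \<and>
            card (?V - cnbh ?V ?E C) \<le> q)"
      if ex: "\<exists>X. strong_backdoor \<Gamma> I X \<and> bd_width I X \<le> int k"
    proof -
      obtain X where X: "strong_backdoor \<Gamma> I X" "bd_width I X \<le> int k" using ex by blast
      let ?XX = "Inl ` X :: ('v + ('v, 'd) constr) set"
      have Xv: "X \<subseteq> vars I" using X(1) unfolding strong_backdoor_def by blast
      have XXV: "?XX \<subseteq> ?V" using Xv unfolding igV_def by blast
      have XXvars: "?XX \<subseteq> Inl ` vars I" using Xv by blast
      have finXX: "finite ?XX" using finite_subset[OF XXV finV] .
      have "treewidth ?XX (torsoE ?V ?E ?XX) \<le> int k"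
        using X(2) unfolding bd_width_def torso_width_def .
      then obtain N TE bag where td: "tree_decomp ?XX (torsoE ?V ?E ?XX) N TE bag"
        and bd: "\<forall>t\<in>N. card (bag t) \<le> k + 1" by (rule tw_le_obtain)
      have bXX: "\<forall>t\<in>N. bag t \<subseteq> ?XX" using td unfolding tree_decomp_def by auto
      have nbc: "\<forall>C\<in>comps ?V ?E ?XX. card (nbh ?V ?E C) \<le> k + 1"
      proof
        fix C assume C: "C \<in> comps ?V ?E ?XX"
        obtain t where t: "t \<in> N" "nbh ?V ?E C \<subseteq> bag t" using nbh_in_bag[OF sym XXV td C] by blast
        have "finite (bag t)" using finite_subset[OF _ finXX] bXX t(1) by blast
        then have "card (nbh ?V ?E C) \<le> card (bag t)" using t(2) by (rule card_mono)
        moreover have "card (bag t) \<le> k + 1" using bd t(1) by blast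
        ultimately show "card (nbh ?V ?E C) \<le> k + 1" by linarith
      qed
      have sf: "card C < q \<or> card (?V - cnbh ?V ?E C) < q" if C: "C \<in> comps ?V ?E ?XX" for C
      proof (rule ccontr)
        assume "\<not> ?thesis"
        then have "card C \<ge> q" "card (?V - cnbh ?V ?E C) \<ge> q" by auto
        then have "has_separation I q (k + 1)"
          by (rule sep_from_comp[OF C XXvars nbc[rule_format, OF C]])
        then show False using assms(3) by blast
      qed
      have noXX: "\<not> ?E u v" if uv: "u \<in> ?XX" "v \<in> ?XX" for u v
      proof -
        obtain a b where "u = Inl a" "v = Inl b" using uv by blast
        then show ?thesis by simp
      qed
      have "\<exists>C\<in>comps ?V ?E ?XX. card C \<ge> q + 1"
      proof (rule ccontr)
        assume nb: "\<not> ?thesis"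
        have small: "\<forall>C\<in>comps ?V ?E ?XX. card C \<le> q"
        proof
          fix C assume "C \<in> comps ?V ?E ?XX"
          then have "\<not> card C \<ge> q + 1" using nb by blast
          then show "card C \<le> q" by linarith
        qed
        have "treewidth ?V ?E \<le> int q + int k"
          by (rule tw_from_torso[where E="?E" and V="?V" and XX="?XX", OF finV sym XXV noXX td bd small nbc])
        then show False using False by simp
      qed
      then obtain C where C: "C \<in> comps ?V ?E ?XX" "card C \<ge> q + 1" by blast
      have rest: "card (?V - cnbh ?V ?E C) < q" using sf[OF C(1)] C(2) by linarith
      have uniq: "\<forall>C' \<in> comps ?V ?E ?XX. card C' \<ge> q + 1 \<longrightarrow> C' = C"
      proof (intro ballI impI)
        fix C' assume C': "C' \<in> comps ?V ?E ?XX" and q': "card C' \<ge> q + 1"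
        show "C' = C"
        proof (rule ccontr)
          assume ne: "C' \<noteq> C"
          have d1: "C' \<inter> C = {}" using comp_disjoint[OF C' C(1)] ne by blast
          have "nbh ?V ?E C \<subseteq> ?XX" using comp_nbh[where E="?E" and V="?V" and X="?XX" and C=C, OF sym C(1)] by blast
          moreover have "C' \<subseteq> ?V - ?XX" using C' unfolding comps_def by blast
          ultimately have "C' \<subseteq> ?V - cnbh ?V ?E C" using d1 unfolding cnbh_def by blast
          then have "card C' \<le> card (?V - cnbh ?V ?E C)" using finV by (simp add: card_mono)
          then show False using rest q' by linarith
        qed
      qed
      have rest': "card (?V - cnbh ?V ?E C) \<le> q" using rest by linarith
      show ?thesis
      proof (rule exI[of _ X], intro conjI)
        show "strong_backdoor \<Gamma> I X" by (rule X(1))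
        show "bd_width I X \<le> int k" by (rule X(2))
        show "\<exists>C \<in> comps ?V ?E (Inl ` X). card C \<ge> q + 1 \<and>
            (\<forall>C' \<in> comps ?V ?E (Inl ` X). card C' \<ge> q + 1 \<longrightarrow> C' = C) \<and>
            card (?V - cnbh ?V ?E C) \<le> q"
          by (rule bexI[of _ C]) (intro conjI C(2) uniq rest', rule C(1))
      qed
    qed
    show ?thesis unfolding nice_def using main by blast
  qed
qed

end
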